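(* Let $\beta=(\beta_n)_{n\ge0}$ be a sequence of positive numbers with $\liminf_n\beta_n^{1/n}\ge1$. Then $\mathcal M(H^2(\beta))=H^\infty$ with equivalent norms (i.e. the two sets coincide and there is $C>0$ with $\|h\|_\infty\le\|M_h\|\le C\|h\|_\infty$ for all $h\in H^\infty$) if and only if $\beta$ is essentially decreasing.
   Context: $H^2(\beta)$ is the Hilbert space of analytic functions $f(z)=\sum_{n\ge0}a_nz^n$ on the unit disk $\mathbb D$ with $\|f\|^2=\sum_{n\ge0}|a_n|^2\beta_n<\infty$. $\mathcal M(H^2(\beta))$ is the space of analytic $h$ on $\mathbb D$ with $hf\in H^2(\beta)$ for all $f\in H^2(\beta)$, normed by the operator norm of the multiplication operator $M_hf=hf$; one always has $\|h\|_\infty\le\|M_h\|$. $H^\infty$ is the space of bounded analytic functions on $\mathbb D$ with the sup norm. $\beta$ is essentially decreasing if there is $C\ge1$ with $\beta_m\le C\beta_n$ for all $m\ge n\ge0$. *)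

theory Defs
  imports "HOL-Complex_Analysis.Complex_Analysis" "HOL-Library.Liminf_Limsup"
begin

definition tcoeff :: "(complex \<Rightarrow> complex) \<Rightarrow> nat \<Rightarrow> complex" where
  "tcoeff f n = (deriv ^^ n) f 0 / of_nat (fact n)"

definition H2 :: "(nat \<Rightarrow> real) \<Rightarrow> (complex \<Rightarrow> complex) set" where
  "H2 beta = {f. f holomorphic_on ball 0 1 \<and>
                 summable (\<lambda>n. (norm (tcoeff f n))\<^sup>2 * beta n)}"

definition H2_norm :: "(nat \<Rightarrow> real) \<Rightarrow> (complex \<Rightarrow> complex) \<Rightarrow> real" where
  "H2_norm beta f = sqrt (\<Sum>n. (norm (tcoeff f n))\<^sup>2 * beta n)"

definition multipliers :: "(nat \<Rightarrow> real) \<Rightarrow> (complex \<Rightarrow> complex) set" where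
  "multipliers beta = {h. h holomorphic_on ball 0 1 \<and>
                          (\<forall>f\<in>H2 beta. (\<lambda>z. h z * f z) \<in> H2 beta)}"

definition mult_norm :: "(nat \<Rightarrow> real) \<Rightarrow> (complex \<Rightarrow> complex) \<Rightarrow> real" where
  "mult_norm beta h = (SUP f\<in>{f\<in>H2 beta. H2_norm beta f \<le> 1}. H2_norm beta (\<lambda>z. h z * f z))"

definition Hinf :: "(complex \<Rightarrow> complex) set" where
  "Hinf = {h. h holomorphic_on ball 0 1 \<and> bounded (h ` ball 0 1)}"

definition sup_norm :: "(complex \<Rightarrow> complex) \<Rightarrow> real" where
  "sup_norm h = (SUP z\<in>ball 0 1. norm (h z))"

definition ess_decreasing :: "(nat \<Rightarrow> real) \<Rightarrow> bool" where
  "ess_decreasing beta \<longleftrightarrow> (\<exists>C\<ge>1. \<forall>m n. n \<le> m \<longrightarrow> beta m \<le> C * beta n)"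

end

theory Submission
  imports Defs "HOL-Computational_Algebra.Polynomial"
begin
lemma ts_sums:
  assumes "f holomorphic_on ball 0 1" "norm z < 1"
  shows "(\<lambda>n. tcoeff f n * z^n) sums f z"
proof -
  have "(\<lambda>n. (deriv ^^ n) f 0 / (fact n) * (z-0)^n) sums f z"
    by (rule holomorphic_power_series[OF assms(1)]) (use assms(2) in simp)
  then show ?thesis unfolding tcoeff_def of_nat_fact by simp
qed

lemma ts_radius:
  assumes "f holomorphic_on ball 0 1"
  shows "fps_conv_radius (Abs_fps (tcoeff f)) \<ge> 1"
  unfolding fps_conv_radius_def
proof (rule conv_radius_geI_ex')
  fix r :: real assume r: "0 < r" "ereal r < 1"
  have "(\<lambda>n. tcoeff f n * of_real r ^ n) sums f (of_real r)"
    by (rule ts_sums[OF assms]) (use r in simp)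
  then show "summable (\<lambda>n. Abs_fps (tcoeff f) $ n * of_real r ^ n)"
    by (simp add: sums_iff)
qed

lemma tcoeff_eval:
  assumes "fps_conv_radius F \<ge> 1" "\<And>z. norm z < 1 \<Longrightarrow> f z = eval_fps F z"
  shows "tcoeff f n = F $ n"
proof -
  have r: "0 < fps_conv_radius F"
    by (rule less_le_trans[OF _ assms(1)]) simp
  have ev: "eventually (\<lambda>z. z \<in> ball 0 1) (nhds (0::complex))"
    by (intro eventually_nhds_in_open) auto
  have "eventually (\<lambda>z. eval_fps F z = f z) (nhds (0::complex))"
    by (rule eventually_mono[OF ev]) (simp add: assms(2))
  with r have "f has_fps_expansion F"
    unfolding has_fps_expansion_def by blast
  from fps_nth_fps_expansion[OF this, of n] show ?thesis by (simp add: tcoeff_def)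
qed

lemma eval_ts:
  assumes "f holomorphic_on ball 0 1" "norm z < 1"
  shows "eval_fps (Abs_fps (tcoeff f)) z = f z"
  using ts_sums[OF assms] unfolding eval_fps_def by (simp add: sums_iff)

lemma tcoeff_mult:
  assumes "h holomorphic_on ball 0 1" "f holomorphic_on ball 0 1"
  shows "tcoeff (\<lambda>z. h z * f z) n = (\<Sum>i\<le>n. tcoeff h i * tcoeff f (n - i))"
proof -
  let ?H = "Abs_fps (tcoeff h)" and ?F = "Abs_fps (tcoeff f)"
  have r1: "fps_conv_radius ?H \<ge> 1" "fps_conv_radius ?F \<ge> 1"
    using ts_radius assms by auto
  have r2: "fps_conv_radius (?H * ?F) \<ge> 1"
    using fps_conv_radius_mult[of ?H ?F] r1 by (meson min.boundedI order.trans)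
  have "tcoeff (\<lambda>z. h z * f z) n = (?H * ?F) $ n"
  proof (rule tcoeff_eval[OF r2])
    fix z :: complex assume z: "norm z < 1"
    have "norm z < fps_conv_radius ?H" "norm z < fps_conv_radius ?F"
      using less_le_trans[OF _ r1(1), of "ereal (norm z)"] less_le_trans[OF _ r1(2), of "ereal (norm z)"] z
      by simp_all
    then show "h z * f z = eval_fps (?H * ?F) z"
      by (simp add: eval_fps_mult eval_ts assms z)
  qed
  also have "\<dots> = (\<Sum>i\<le>n. tcoeff h i * tcoeff f (n - i))"
    by (simp add: fps_mult_nth atLeast0AtMost)
  finally show ?thesis .
qed

lemma tcoeff_exp:
  assumes "f has_fps_expansion F"
  shows "tcoeff f n = F $ n"
  using fps_nth_fps_expansion[OF assms, of n] by (simp add: tcoeff_def)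

lemma hol_exp:
  assumes "f holomorphic_on ball 0 1"
  shows "f has_fps_expansion Abs_fps (tcoeff f)"
proof -
  have r: "0 < fps_conv_radius (Abs_fps (tcoeff f))"
    by (rule less_le_trans[OF _ ts_radius[OF assms]]) simp
  have ev: "eventually (\<lambda>z. z \<in> ball 0 1) (nhds (0::complex))"
    by (intro eventually_nhds_in_open) auto
  have "eventually (\<lambda>z. eval_fps (Abs_fps (tcoeff f)) z = f z) (nhds (0::complex))"
    by (rule eventually_mono[OF ev]) (simp add: eval_ts assms)
  with r show ?thesis unfolding has_fps_expansion_def by blast
qed

lemma tcoeff_cmult:
  assumes "f holomorphic_on ball 0 1"
  shows "tcoeff (\<lambda>z. c * f z) n = c * tcoeff f n"
  using tcoeff_exp[OF has_fps_expansion_cmult_left[OF hol_exp[OF assms], of c], of n]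
  by simp

lemma tcoeff_monom: "tcoeff (\<lambda>z. z ^ k) n = (if n = k then 1 else 0)"
  using tcoeff_exp[OF has_fps_expansion_fps_X_power[of k], of n] by simp

lemma monom_summable: "summable (\<lambda>n. (norm (tcoeff (\<lambda>z. z ^ k) n))\<^sup>2 * beta n)"
  and monom_sum: "(\<Sum>n. (norm (tcoeff (\<lambda>z. z ^ k) n))\<^sup>2 * beta n) = beta k"
proof -
  have "(\<lambda>n. (norm (tcoeff (\<lambda>z. z ^ k) n))\<^sup>2 * beta n) = (\<lambda>n. if n = k then beta k else 0)"
    by (auto simp: tcoeff_monom)
  moreover have "(\<lambda>n. if n = k then beta k else 0) sums beta k"
    by (rule sums_single)
  ultimately show "summable (\<lambda>n. (norm (tcoeff (\<lambda>z. z ^ k) n))\<^sup>2 * beta n)"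
    "(\<Sum>n. (norm (tcoeff (\<lambda>z. z ^ k) n))\<^sup>2 * beta n) = beta k"
    by (auto simp: sums_iff)
qed

lemma monom_H2: "(\<lambda>z. z ^ k) \<in> H2 beta"
  unfolding H2_def using monom_summable by (auto intro!: holomorphic_intros)

lemma monom_norm: "H2_norm beta (\<lambda>z. z ^ k) = sqrt (beta k)"
  unfolding H2_norm_def monom_sum ..

lemma monom_Hinf: "(\<lambda>z::complex. z ^ k) \<in> Hinf"
proof -
  have "bounded ((\<lambda>z::complex. z ^ k) ` ball 0 1)"
    unfolding bounded_iff
  proof (intro exI ballI)
    fix y assume "y \<in> (\<lambda>z::complex. z ^ k) ` ball 0 1"
    then obtain z where "norm z < 1" "y = z ^ k" by auto
    then show "norm y \<le> 1" by (simp add: norm_power power_le_one)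
  qed
  then show ?thesis unfolding Hinf_def by (auto intro!: holomorphic_intros)
qed

lemma monom_sup: "sup_norm (\<lambda>z::complex. z ^ k) \<le> 1"
  unfolding sup_norm_def
proof (rule cSUP_least)
  show "ball (0::complex) 1 \<noteq> {}" by (metis centre_in_ball empty_iff zero_less_one)
  fix z :: complex assume "z \<in> ball 0 1"
  then show "norm (z ^ k) \<le> 1" by (simp add: norm_power power_le_one)
qed

lemma forward_dir:
  fixes beta :: "nat \<Rightarrow> real"
  assumes pos: "\<And>n. beta n > 0"
    and C: "C > 0"
    and H: "\<forall>h\<in>Hinf. \<forall>f\<in>H2 beta. H2_norm beta (\<lambda>z. h z * f z) \<le> C * sup_norm h * H2_norm beta f"
  shows "ess_decreasing beta"
  unfolding ess_decreasing_def
proof (intro exI[of _ "max 1 (C^2)"] conjI allI impI)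
  show "1 \<le> max 1 (C^2)" by simp
  fix m n :: nat assume nm: "n \<le> m"
  have eq: "(\<lambda>z::complex. z ^ (m - n) * z ^ n) = (\<lambda>z. z ^ m)"
    using nm by (simp add: power_add[symmetric])
  have "H2_norm beta (\<lambda>z. z ^ (m - n) * z ^ n) \<le> C * sup_norm (\<lambda>z::complex. z ^ (m - n)) * H2_norm beta (\<lambda>z. z ^ n)"
    using bspec[OF bspec[OF H monom_Hinf[of "m - n"]] monom_H2[of n beta]] by simp
  then have "sqrt (beta m) \<le> C * sup_norm (\<lambda>z::complex. z ^ (m - n)) * sqrt (beta n)"
    unfolding eq monom_norm .
  also have "\<dots> \<le> C * 1 * sqrt (beta n)"
    using C monom_sup[of "m-n"] pos[of n] by (intro mult_right_mono mult_left_mono) auto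
  finally have "sqrt (beta m) \<le> C * sqrt (beta n)" by simp
  then have "(sqrt (beta m))^2 \<le> (C * sqrt (beta n))^2"
    by (intro power_mono) (auto intro: less_imp_le pos)
  then have "beta m \<le> C^2 * beta n"
    using pos[of m] pos[of n] by (simp add: power_mult_distrib)
  also have "\<dots> \<le> max 1 (C^2) * beta n"
    using pos[of n] by (intro mult_right_mono) auto
  finally show "beta m \<le> max 1 (C^2) * beta n" .
qed


lemma zero_H2: "(\<lambda>z. 0) \<in> H2 beta" and zero_norm: "H2_norm beta (\<lambda>z. 0) = 0"
proof -
  have t: "tcoeff (\<lambda>z. 0) n = 0" for n
    using tcoeff_exp[OF has_fps_expansion_0, of n] by simp
  show "(\<lambda>z. 0) \<in> H2 beta" unfolding H2_def by (simp add: t)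
  show "H2_norm beta (\<lambda>z. 0) = 0" unfolding H2_norm_def by (simp add: t)
qed

lemma Hinf_bdd:
  assumes "h \<in> Hinf" "norm z < 1"
  shows "norm (h z) \<le> sup_norm h"
proof -
  have "bounded (h ` ball 0 1)" using assms unfolding Hinf_def by auto
  then have "bdd_above ((\<lambda>z. norm (h z)) ` ball 0 1)"
    by (auto simp: bounded_iff bdd_above_def)
  then show ?thesis unfolding sup_norm_def
    by (rule cSUP_upper[rotated]) (use assms in simp)
qed

lemma sup_norm_nonneg: 
  assumes "h \<in> Hinf" shows "sup_norm h \<ge> 0"
proof -
  have "norm (h 0) \<le> sup_norm h" using Hinf_bdd[OF assms, of 0] by simp
  then show ?thesis by (rule order.trans[OF norm_ge_zero])
qed

lemma LS:
  fixes beta :: "nat \<Rightarrow> real"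
  assumes pos: "\<And>n. beta n > 0"
    and lim: "liminf (\<lambda>n. ereal (root n (beta n))) \<ge> 1"
    and s: "0 \<le> s" "s < 1"
  shows "summable (\<lambda>n. s ^ n / beta n)"
proof -
  define t where "t = (s + 1) / 2"
  have t: "s < t" "t < 1" "0 < t" using s by (auto simp: t_def)
  have "ereal t < liminf (\<lambda>n. ereal (root n (beta n)))"
    by (rule less_le_trans[OF _ lim]) (use t(2) in simp)
  then have ev: "eventually (\<lambda>n. ereal t < ereal (root n (beta n))) sequentially"
    by (rule less_LiminfD)
  have "eventually (\<lambda>n. norm (s ^ n / beta n) \<le> (s / t) ^ n) sequentially"
    using ev eventually_gt_at_top[of 0]
  proof eventually_elim
    case (elim n)
    then have tr: "t < root n (beta n)" by simp
    have "t ^ n < root n (beta n) ^ n"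
      using tr t(3) elim(2) by (intro power_strict_mono) auto
    also have "\<dots> = beta n" using elim(2) pos[of n] by simp
    finally have tb: "t ^ n < beta n" .
    have "norm (s ^ n / beta n) = s ^ n / beta n" using s pos[of n] by simp
    also have "\<dots> \<le> s ^ n / t ^ n"
      using tb s t(3) pos[of n] by (intro divide_left_mono) auto
    also have "\<dots> = (s / t) ^ n" by (simp add: power_divide)
    finally show ?case .
  qed
  moreover have "summable (\<lambda>n. (s / t) ^ n)"
    using s t by (intro summable_geometric) auto
  ultimately show ?thesis by (rule summable_comparison_test_ev)
qed

lemma SCS:
  fixes x y :: "nat \<Rightarrow> real"
  assumes "summable (\<lambda>n. (x n)\<^sup>2)" "summable (\<lambda>n. (y n)\<^sup>2)"
  shows "summable (\<lambda>n. \<bar>x n * y n\<bar>)"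
    and "(\<Sum>n. \<bar>x n * y n\<bar>) \<le> sqrt (\<Sum>n. (x n)\<^sup>2) * sqrt (\<Sum>n. (y n)\<^sup>2)"
proof -
  have le: "\<bar>x n * y n\<bar> \<le> (x n)\<^sup>2 + (y n)\<^sup>2" for n
  proof -
    have "2 * \<bar>x n\<bar> * \<bar>y n\<bar> \<le> \<bar>x n\<bar>\<^sup>2 + \<bar>y n\<bar>\<^sup>2" by (rule sum_squares_bound)
    moreover have "0 \<le> \<bar>x n\<bar> * \<bar>y n\<bar>" by simp
    ultimately show ?thesis unfolding abs_mult power2_abs by linarith
  qed
  show sm: "summable (\<lambda>n. \<bar>x n * y n\<bar>)"
    by (rule summable_comparison_test[OF _ summable_add[OF assms]]) (use le in auto)
  show "(\<Sum>n. \<bar>x n * y n\<bar>) \<le> sqrt (\<Sum>n. (x n)\<^sup>2) * sqrt (\<Sum>n. (y n)\<^sup>2)"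
  proof (rule suminf_le_const[OF sm])
    fix N
    have "(\<Sum>n<N. \<bar>x n\<bar> * \<bar>y n\<bar>)\<^sup>2 \<le> (\<Sum>n<N. \<bar>x n\<bar>\<^sup>2) * (\<Sum>n<N. \<bar>y n\<bar>\<^sup>2)"
      by (rule Cauchy_Schwarz_ineq_sum)
    also have "\<dots> \<le> (\<Sum>n. (x n)\<^sup>2) * (\<Sum>n. (y n)\<^sup>2)"
      by (intro mult_mono) (auto intro!: sum_nonneg suminf_nonneg sum_le_suminf assms)
    finally have "(\<Sum>n<N. \<bar>x n * y n\<bar>)\<^sup>2 \<le> (\<Sum>n. (x n)\<^sup>2) * (\<Sum>n. (y n)\<^sup>2)"
      by (simp add: abs_mult)
    then have "sqrt ((\<Sum>n<N. \<bar>x n * y n\<bar>)\<^sup>2) \<le> sqrt ((\<Sum>n. (x n)\<^sup>2) * (\<Sum>n. (y n)\<^sup>2))"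
      by (rule real_sqrt_le_mono)
    then show "(\<Sum>n<N. \<bar>x n * y n\<bar>) \<le> sqrt (\<Sum>n. (x n)\<^sup>2) * sqrt (\<Sum>n. (y n)\<^sup>2)"
      by (simp add: real_sqrt_mult sum_nonneg)
  qed
qed

definition Kn :: "(nat \<Rightarrow> real) \<Rightarrow> complex \<Rightarrow> real" where
  "Kn beta w = sqrt (\<Sum>n. (norm w ^ 2) ^ n / beta n)"

lemma PE:
  fixes beta :: "nat \<Rightarrow> real"
  assumes pos: "\<And>n. beta n > 0"
    and lim: "liminf (\<lambda>n. ereal (root n (beta n))) \<ge> 1"
    and g: "g \<in> H2 beta" and w: "norm w < 1"
  shows "norm (g w) \<le> H2_norm beta g * Kn beta w"
proof -
  define x where "x n = norm (tcoeff g n) * sqrt (beta n)" for n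
  define y where "y n = norm w ^ n / sqrt (beta n)" for n
  have x2: "(x n)\<^sup>2 = (norm (tcoeff g n))\<^sup>2 * beta n" for n
    using pos[of n] by (simp add: x_def power_mult_distrib)
  have y2: "(y n)\<^sup>2 = (norm w ^ 2) ^ n / beta n" for n
    using pos[of n] by (simp add: y_def power_divide power_mult[symmetric] mult.commute)
  have sx: "summable (\<lambda>n. (x n)\<^sup>2)" using g unfolding H2_def x2 by simp
  have sy: "summable (\<lambda>n. (y n)\<^sup>2)" unfolding y2
    by (rule LS[OF pos lim]) (use w in \<open>auto simp: power_less_one_iff abs_square_less_1\<close>)
  have xy: "\<bar>x n * y n\<bar> = norm (tcoeff g n * w ^ n)" for n
    using pos[of n] by (simp add: x_def y_def norm_mult norm_power)
  have sn: "summable (\<lambda>n. norm (tcoeff g n * w ^ n))"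
    using SCS(1)[OF sx sy] unfolding xy .
  have "g w = (\<Sum>n. tcoeff g n * w ^ n)"
    using ts_sums[of g w] g w unfolding H2_def by (simp add: sums_iff)
  then have "norm (g w) \<le> (\<Sum>n. norm (tcoeff g n * w ^ n))"
    using summable_norm[OF sn] by simp
  also have "\<dots> \<le> sqrt (\<Sum>n. (x n)\<^sup>2) * sqrt (\<Sum>n. (y n)\<^sup>2)"
    using SCS(2)[OF sx sy] unfolding xy .
  also have "\<dots> = H2_norm beta g * Kn beta w"
    unfolding H2_norm_def Kn_def x2 y2 ..
  finally show ?thesis .
qed

lemma H2_scale:
  assumes f: "f \<in> H2 beta"
  shows "(\<lambda>z. c * f z) \<in> H2 beta" "H2_norm beta (\<lambda>z. c * f z) = norm c * H2_norm beta f"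
proof -
  have hol: "f holomorphic_on ball 0 1" using f unfolding H2_def by auto
  have eq: "(norm (tcoeff (\<lambda>z. c * f z) n))\<^sup>2 * beta n = (norm c)\<^sup>2 * ((norm (tcoeff f n))\<^sup>2 * beta n)" for n
    by (simp add: tcoeff_cmult[OF hol] norm_mult power_mult_distrib)
  have s: "summable (\<lambda>n. (norm (tcoeff f n))\<^sup>2 * beta n)" using f unfolding H2_def by auto
  have "summable (\<lambda>n. (norm (tcoeff (\<lambda>z. c * f z) n))\<^sup>2 * beta n)"
    unfolding eq by (rule summable_mult[OF s])
  then show "(\<lambda>z. c * f z) \<in> H2 beta"
    unfolding H2_def using hol by (auto intro!: holomorphic_intros)
  show "H2_norm beta (\<lambda>z. c * f z) = norm c * H2_norm beta f"
    unfolding H2_norm_def eq suminf_mult[OF s] by (simp add: real_sqrt_mult)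
qed


lemma root_orth:
  fixes N n m :: nat
  assumes N: "N > 0" "n < N" "m < N"
  shows "(\<Sum>j<N. (exp (2 * of_real pi * \<i> / of_nat N) ^ n * cnj (exp (2 * of_real pi * \<i> / of_nat N)) ^ m) ^ j)
         = (if n = m then of_nat N else 0)"
proof -
  define a where "a = 2 * of_real pi * \<i> / (of_nat N :: complex)"
  define \<omega> where "\<omega> = exp a"
  have ca: "cnj a = - a" unfolding a_def by simp
  have c\<omega>: "cnj \<omega> = exp (- a)" unfolding \<omega>_def by (simp add: exp_cnj ca)
  have unit: "\<omega> * cnj \<omega> = 1" unfolding \<omega>_def exp_cnj ca by (simp add: exp_minus)
  have \<omega>N: "\<omega> ^ N = 1"
  proof -
    have "\<omega> ^ N = exp (of_nat N * a)" unfolding \<omega>_def by (simp add: exp_of_nat_mult)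
    also have "of_nat N * a = 2 * of_real pi * \<i>" unfolding a_def using N by simp
    finally show ?thesis by simp
  qed
  have c\<omega>N: "cnj \<omega> ^ N = 1" using \<omega>N by (metis complex_cnj_one complex_cnj_power)
  show ?thesis
  proof (cases "n = m")
    case True
    have "\<omega> ^ n * cnj \<omega> ^ m = 1" using True unit by (simp add: power_mult_distrib[symmetric])
    then show ?thesis using True unfolding \<omega>_def a_def by simp
  next
    case False
    define c where "c = \<omega> ^ n * cnj \<omega> ^ m"
    have cN: "c ^ N = 1" unfolding c_def
      by (simp add: power_mult_distrib power_mult[symmetric] mult.commute[of _ N] power_mult \<omega>N c\<omega>N)
    have c1: "c \<noteq> 1"
    proof
      assume "c = 1"
      then have "\<omega> ^ n * (cnj \<omega> ^ m * \<omega> ^ m) = \<omega> ^ m" unfolding c_def by (simp add: mult.assoc)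
      moreover have "cnj \<omega> ^ m * \<omega> ^ m = 1" using unit by (simp add: power_mult_distrib[symmetric] mult.commute)
      ultimately have "\<omega> ^ n = \<omega> ^ m" by simp
      then have "exp (of_nat n * a) = exp (of_nat m * a)" unfolding \<omega>_def by (simp add: exp_of_nat_mult)
      then obtain k :: int where k: "of_nat n * a = of_nat m * a + (of_int (2 * k) * pi) * \<i>"
        unfolding exp_eq by blast
      have "Im (of_nat n * a) = Im (of_nat m * a + (of_int (2 * k) * pi) * \<i>)" using k by simp
      then have "real n * (2 * pi / real N) = real m * (2 * pi / real N) + 2 * real_of_int k * pi"
        unfolding a_def by simp
      then have "real n * (2 * pi) = real m * (2 * pi) + 2 * real_of_int k * pi * real N"
        using N by (simp add: field_simps)
      then have "(real n - real m - real_of_int k * real N) * (2 * pi) = 0"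
        by (simp add: algebra_simps)
      then have "real n - real m - real_of_int k * real N = 0" by simp
      then have ki: "int n - int m = k * int N"
        by (metis (mono_tags, opaque_lifting) diff_eq_eq mult.commute of_int_eq_iff of_int_mult of_int_of_nat_eq of_int_diff add.commute add_0)
      have "k = 0"
      proof (rule ccontr)
        assume "k \<noteq> 0"
        then have "\<bar>k * int N\<bar> \<ge> int N" using N by (simp add: abs_mult mult_le_cancel_right1)
        moreover have "\<bar>int n - int m\<bar> < int N" using N by auto
        ultimately show False using ki by simp
      qed
      then show False using ki False by simp
    qed
    have "(\<Sum>j<N. c ^ j) = 0" using c1 cN by (simp add: sum_gp_strict)
    then show ?thesis using False unfolding c_def \<omega>_def a_def by simp
  qed
qed

lemma DP:
  fixes b :: "nat \<Rightarrow> complex" and N :: nat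
  assumes N: "N > 0"
  shows "(\<Sum>j<N. (cmod (\<Sum>n<N. b n * exp (2 * of_real pi * \<i> / of_nat N) ^ (j * n)))\<^sup>2)
       = real N * (\<Sum>n<N. (cmod (b n))\<^sup>2)"
proof -
  define \<omega> where "\<omega> = exp (2 * of_real pi * \<i> / (of_nat N :: complex))"
  have tm: "(b n * \<omega> ^ (j * n)) * cnj (b m * \<omega> ^ (j * m)) = (b n * cnj (b m)) * (\<omega> ^ n * cnj \<omega> ^ m) ^ j"
    for n m j
    by (simp add: power_mult_distrib power_mult[symmetric] mult_ac)
  have "complex_of_real (\<Sum>j<N. (cmod (\<Sum>n<N. b n * \<omega> ^ (j * n)))\<^sup>2)
      = (\<Sum>j<N. (\<Sum>n<N. b n * \<omega> ^ (j * n)) * cnj (\<Sum>m<N. b m * \<omega> ^ (j * m)))"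
    by (simp only: of_real_sum complex_norm_square)
  also have "\<dots> = (\<Sum>j<N. \<Sum>n<N. \<Sum>m<N. (b n * \<omega> ^ (j * n)) * cnj (b m * \<omega> ^ (j * m)))"
    by (simp only: cnj_sum sum_product)
  also have "\<dots> = (\<Sum>j<N. \<Sum>n<N. \<Sum>m<N. (b n * cnj (b m)) * (\<omega> ^ n * cnj \<omega> ^ m) ^ j)"
    by (simp only: tm)
  also have "\<dots> = (\<Sum>n<N. \<Sum>j<N. \<Sum>m<N. (b n * cnj (b m)) * (\<omega> ^ n * cnj \<omega> ^ m) ^ j)"
    by (rule sum.swap)
  also have "\<dots> = (\<Sum>n<N. \<Sum>m<N. \<Sum>j<N. (b n * cnj (b m)) * (\<omega> ^ n * cnj \<omega> ^ m) ^ j)"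
    by (rule sum.cong[OF refl], rule sum.swap)
  also have "\<dots> = (\<Sum>n<N. \<Sum>m<N. (b n * cnj (b m)) * (if n = m then of_nat N else 0))"
    by (intro sum.cong refl) (simp add: sum_distrib_left[symmetric] root_orth[OF N] \<omega>_def)
  also have "\<dots> = (\<Sum>n<N. (b n * cnj (b n)) * of_nat N)"
    by (simp add: if_distrib cong: if_cong)
  also have "\<dots> = complex_of_real (real N * (\<Sum>n<N. (cmod (b n))\<^sup>2))"
    unfolding of_real_mult of_real_sum of_real_of_nat_eq complex_norm_square
    by (simp add: sum_distrib_left mult_ac)
  finally show ?thesis unfolding \<omega>_def using of_real_eq_iff by blast
qed


definition omg :: "nat \<Rightarrow> complex" where
  "omg N = exp (2 * of_real pi * \<i> / of_nat N)"

lemma norm_omg_pow: "norm (omg N ^ j) = 1"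
  unfolding omg_def by (simp add: norm_power norm_exp_eq_Re)

lemma poly_sumN:
  fixes Q :: "complex poly"
  assumes "degree Q < N"
  shows "poly Q z = (\<Sum>i<N. coeff Q i * z ^ i)"
proof -
  have "poly Q z = (\<Sum>i\<le>degree Q. coeff Q i * z ^ i)" by (rule poly_altdef)
  also have "\<dots> = (\<Sum>i<N. coeff Q i * z ^ i)"
    by (rule sum.mono_neutral_left) (use assms in \<open>auto simp: coeff_eq_0\<close>)
  finally show ?thesis .
qed

lemma DPP:
  fixes Q :: "complex poly" and r :: real
  assumes N: "N > 0" "degree Q < N" and r: "r \<ge> 0"
  shows "(\<Sum>j<N. (cmod (poly Q (of_real r * omg N ^ j)))\<^sup>2) = real N * (\<Sum>n<N. (cmod (coeff Q n))\<^sup>2 * r ^ (2 * n))"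
proof -
  have eq: "poly Q (of_real r * omg N ^ j) = (\<Sum>n<N. (coeff Q n * of_real r ^ n) * omg N ^ (j * n))" for j
    unfolding poly_sumN[OF N(2)]
    by (intro sum.cong refl) (simp add: power_mult_distrib power_mult[symmetric] mult_ac)
  have "(\<Sum>j<N. (cmod (poly Q (of_real r * omg N ^ j)))\<^sup>2)
      = real N * (\<Sum>n<N. (cmod (coeff Q n * of_real r ^ n))\<^sup>2)"
    unfolding eq using DP[OF N(1), of "\<lambda>n. coeff Q n * of_real r ^ n"] unfolding omg_def .
  also have "\<dots> = real N * (\<Sum>n<N. (cmod (coeff Q n))\<^sup>2 * r ^ (2 * n))"
    using r by (simp add: norm_mult norm_power power_mult_distrib power_mult[symmetric] mult.commute)
  finally show ?thesis .
qed

lemma toeplitz_M: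
  fixes h f :: "complex \<Rightarrow> complex" and r S E :: real
  assumes hh: "h holomorphic_on ball 0 1" and f: "f holomorphic_on ball 0 1"
    and r: "0 \<le> r" "r < 1" and kM: "k \<le> M"
    and tb: "\<And>z. norm z = r \<Longrightarrow> norm (\<Sum>i\<le>M. tcoeff h i * z ^ i) \<le> S + E"
  shows "(\<Sum>n\<le>k. (cmod (tcoeff (\<lambda>z. h z * f z) n))\<^sup>2 * r ^ (2 * n))
         \<le> (S + E)\<^sup>2 * (\<Sum>n\<le>k. (cmod (tcoeff f n))\<^sup>2)"
proof -
  define a where "a = tcoeff h"
  define b where "b = tcoeff f"
  define P where "P = (\<Sum>n\<le>k. monom (b n) n)"
  define HM where "HM = (\<Sum>i\<le>M. monom (a i) i)"
  define G where "G = HM * P"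
  define N where "N = M + k + 1"
  have N0: "N > 0" unfolding N_def by simp
  have coeffP: "coeff P n = (if n \<le> k then b n else 0)" for n
    unfolding P_def coeff_sum by (simp add: sum.delta)
  have coeffHM: "coeff HM n = (if n \<le> M then a n else 0)" for n
    unfolding HM_def coeff_sum by (simp add: sum.delta)
  have degP: "degree P \<le> k" unfolding P_def
    by (intro degree_sum_le) (auto intro: order.trans[OF degree_monom_le])
  have degHM: "degree HM \<le> M" unfolding HM_def
    by (intro degree_sum_le) (auto intro: order.trans[OF degree_monom_le])
  have degG: "degree G < N" unfolding G_def N_def
    using degree_mult_le[of HM P] degP degHM by linarith
  have degP': "degree P < N" using degP unfolding N_def by linarith
  have coeffG: "coeff G n = tcoeff (\<lambda>z. h z * f z) n" if "n \<le> k" for n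
  proof -
    have "coeff G n = (\<Sum>i\<le>n. coeff HM i * coeff P (n - i))" unfolding G_def coeff_mult ..
    also have "\<dots> = (\<Sum>i\<le>n. a i * b (n - i))"
      using that kM by (intro sum.cong refl) (auto simp: coeffHM coeffP)
    also have "\<dots> = tcoeff (\<lambda>z. h z * f z) n"
      unfolding a_def b_def by (rule tcoeff_mult[OF hh f, symmetric])
    finally show ?thesis .
  qed
  have polyHM: "poly HM z = (\<Sum>i\<le>M. a i * z ^ i)" for z
    unfolding HM_def poly_sum poly_monom ..
  have SE: "S + E \<ge> 0" using tb[of "of_real r"] r by (auto intro: order.trans[OF norm_ge_zero])
  define z where "z j = of_real r * omg N ^ j" for j
  have nz: "norm (z j) = r" for j unfolding z_def using r by (simp add: norm_mult norm_omg_pow)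
  have "real N * (\<Sum>n\<le>k. (cmod (tcoeff (\<lambda>z. h z * f z) n))\<^sup>2 * r ^ (2 * n))
      = real N * (\<Sum>n\<le>k. (cmod (coeff G n))\<^sup>2 * r ^ (2 * n))"
    by (simp add: coeffG)
  also have "\<dots> \<le> real N * (\<Sum>n<N. (cmod (coeff G n))\<^sup>2 * r ^ (2 * n))"
    by (intro mult_left_mono sum_mono2) (use r in \<open>auto simp: N_def\<close>)
  also have "\<dots> = (\<Sum>j<N. (cmod (poly G (z j)))\<^sup>2)"
    unfolding z_def by (rule DPP[OF N0 degG r(1), symmetric])
  also have "\<dots> = (\<Sum>j<N. (cmod (poly HM (z j)))\<^sup>2 * (cmod (poly P (z j)))\<^sup>2)"
    unfolding G_def by (simp add: norm_mult power_mult_distrib)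
  also have "\<dots> \<le> (\<Sum>j<N. (S + E)\<^sup>2 * (cmod (poly P (z j)))\<^sup>2)"
  proof (rule sum_mono)
    fix j
    have "cmod (poly HM (z j)) \<le> S + E" unfolding polyHM a_def by (rule tb[OF nz])
    then have "(cmod (poly HM (z j)))\<^sup>2 \<le> (S + E)\<^sup>2" by (intro power_mono) auto
    then show "(cmod (poly HM (z j)))\<^sup>2 * (cmod (poly P (z j)))\<^sup>2 \<le> (S + E)\<^sup>2 * (cmod (poly P (z j)))\<^sup>2"
      by (intro mult_right_mono) auto
  qed
  also have "\<dots> = (S + E)\<^sup>2 * (\<Sum>j<N. (cmod (poly P (z j)))\<^sup>2)"
    by (simp add: sum_distrib_left)
  also have "\<dots> = (S + E)\<^sup>2 * (real N * (\<Sum>n<N. (cmod (coeff P n))\<^sup>2 * r ^ (2 * n)))"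
    unfolding z_def by (simp only: DPP[OF N0 degP' r(1)])
  also have "(\<Sum>n<N. (cmod (coeff P n))\<^sup>2 * r ^ (2 * n)) = (\<Sum>n\<le>k. (cmod (coeff P n))\<^sup>2 * r ^ (2 * n))"
    by (rule sum.mono_neutral_right) (auto simp: N_def coeffP)
  also have "\<dots> \<le> (\<Sum>n\<le>k. (cmod (b n))\<^sup>2)"
  proof (rule sum_mono)
    fix n assume "n \<in> {..k}"
    have "r ^ (2 * n) \<le> 1" using r by (intro power_le_one) auto
    then show "(cmod (coeff P n))\<^sup>2 * r ^ (2 * n) \<le> (cmod (b n))\<^sup>2"
      using \<open>n \<in> {..k}\<close> by (simp add: coeffP mult_left_le)
  qed
  finally have "real N * (\<Sum>n\<le>k. (cmod (tcoeff (\<lambda>z. h z * f z) n))\<^sup>2 * r ^ (2 * n))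
      \<le> (S + E)\<^sup>2 * (real N * (\<Sum>n\<le>k. (cmod (b n))\<^sup>2))"
    by (simp add: mult_left_mono)
  then show ?thesis using N0 unfolding b_def by (simp add: algebra_simps)
qed

lemma tail_tendsto:
  fixes g :: "nat \<Rightarrow> real"
  assumes "summable g"
  shows "(\<lambda>M. \<Sum>i. g (i + M)) \<longlonglongrightarrow> 0"
proof (rule LIMSEQ_I)
  fix e :: real assume "0 < e"
  from suminf_exist_split[OF this assms] show "\<exists>N. \<forall>n\<ge>N. norm ((\<Sum>i. g (i + n)) - 0) < e" by simp
qed

lemma toeplitz_r:
  fixes h f :: "complex \<Rightarrow> complex" and r S :: real
  assumes hh: "h holomorphic_on ball 0 1" and hS: "\<And>z. norm z < 1 \<Longrightarrow> norm (h z) \<le> S"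
    and f: "f holomorphic_on ball 0 1"
    and r: "0 \<le> r" "r < 1"
  shows "(\<Sum>n\<le>k. (cmod (tcoeff (\<lambda>z. h z * f z) n))\<^sup>2 * r ^ (2 * n))
         \<le> S\<^sup>2 * (\<Sum>n\<le>k. (cmod (tcoeff f n))\<^sup>2)"
proof -
  define a where "a = tcoeff h"
  define g where "g i = norm (a i) * r ^ i" for i
  define x where "x = (1 + r) / 2"
  have x: "r < x" "x < 1" using r by (auto simp: x_def)
  have "summable (\<lambda>n. a n * complex_of_real x ^ n)"
    using ts_sums[OF hh, of "of_real x"] x r unfolding a_def by (auto simp: sums_iff)
  then have sg0: "summable (\<lambda>n. norm (a n * complex_of_real r ^ n))"
    by (rule powser_insidea) (use x r in auto)
  have gn: "norm (a n * z ^ n) = g n" if "norm z = r" for z n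
    using that by (simp add: g_def norm_mult norm_power)
  have sg: "summable g" using sg0 gn[of "of_real r"] r by simp
  define E where "E M = (\<Sum>i. g (i + Suc M))" for M
  have tb: "norm (\<Sum>i\<le>M. tcoeff h i * z ^ i) \<le> S + E M" if z: "norm z = r" for z M
  proof -
    have zl: "norm z < 1" using z r by simp
    have sa: "summable (\<lambda>n. norm (a n * z ^ n))" using sg gn[OF z] by simp
    have "h z = (\<Sum>n. a n * z ^ n)" using ts_sums[OF hh zl] unfolding a_def by (simp add: sums_iff)
    also have "\<dots> = (\<Sum>i. a (i + Suc M) * z ^ (i + Suc M)) + (\<Sum>i<Suc M. a i * z ^ i)"
      by (rule suminf_split_initial_segment[OF summable_norm_cancel[OF sa]])
    finally have eq: "(\<Sum>i\<le>M. a i * z ^ i) = h z - (\<Sum>i. a (i + Suc M) * z ^ (i + Suc M))"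
      by (simp add: lessThan_Suc_atMost)
    have st: "summable (\<lambda>i. norm (a (i + Suc M) * z ^ (i + Suc M)))"
      using summable_ignore_initial_segment[OF sa, of "Suc M"] by simp
    have "norm (\<Sum>i. a (i + Suc M) * z ^ (i + Suc M)) \<le> (\<Sum>i. norm (a (i + Suc M) * z ^ (i + Suc M)))"
      by (rule summable_norm[OF st])
    also have "\<dots> = E M" unfolding E_def using gn[OF z] by (simp del: power_Suc add_Suc_right add_Suc)
    finally have "norm (\<Sum>i. a (i + Suc M) * z ^ (i + Suc M)) \<le> E M" .
    moreover have "norm (h z) \<le> S" using hS zl .
    ultimately show ?thesis unfolding a_def[symmetric] eq
      by (meson add_mono norm_triangle_ineq4 order.trans)
  qed
  have lim: "(\<lambda>M. (S + E M)\<^sup>2 * (\<Sum>n\<le>k. (cmod (tcoeff f n))\<^sup>2)) \<longlonglongrightarrow> (S + 0)\<^sup>2 * (\<Sum>n\<le>k. (cmod (tcoeff f n))\<^sup>2)"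
  proof -
    have "E \<longlonglongrightarrow> 0" unfolding E_def
      using LIMSEQ_Suc[OF tail_tendsto[OF sg]] by simp
    then show ?thesis by (intro tendsto_intros)
  qed
  have "(\<Sum>n\<le>k. (cmod (tcoeff (\<lambda>z. h z * f z) n))\<^sup>2 * r ^ (2 * n)) \<le> (S + 0)\<^sup>2 * (\<Sum>n\<le>k. (cmod (tcoeff f n))\<^sup>2)"
    by (rule LIMSEQ_le_const[OF lim]) (use toeplitz_M[OF hh f r _ tb] in \<open>auto intro!: exI[of _ k]\<close>)
  then show ?thesis by simp
qed

lemma toeplitz:
  fixes h f :: "complex \<Rightarrow> complex" and S :: real
  assumes hh: "h holomorphic_on ball 0 1" and hS: "\<And>z. norm z < 1 \<Longrightarrow> norm (h z) \<le> S"
    and f: "f holomorphic_on ball 0 1"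
  shows "(\<Sum>n\<le>k. (cmod (tcoeff (\<lambda>z. h z * f z) n))\<^sup>2) \<le> S\<^sup>2 * (\<Sum>n\<le>k. (cmod (tcoeff f n))\<^sup>2)"
proof -
  define r where "r m = real m / real (Suc m)" for m
  have r: "0 \<le> r m" "r m < 1" for m unfolding r_def by auto
  have "r \<longlonglongrightarrow> 1" unfolding r_def by (rule LIMSEQ_n_over_Suc_n)
  then have "(\<lambda>m. \<Sum>n\<le>k. (cmod (tcoeff (\<lambda>z. h z * f z) n))\<^sup>2 * r m ^ (2 * n))
      \<longlonglongrightarrow> (\<Sum>n\<le>k. (cmod (tcoeff (\<lambda>z. h z * f z) n))\<^sup>2 * 1 ^ (2 * n))"
    by (intro tendsto_intros)
  then have "(\<Sum>n\<le>k. (cmod (tcoeff (\<lambda>z. h z * f z) n))\<^sup>2 * 1 ^ (2 * n)) \<le> S\<^sup>2 * (\<Sum>n\<le>k. (cmod (tcoeff f n))\<^sup>2)"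
    by (rule LIMSEQ_le_const2) (use toeplitz_r[OF hh hS f r] in auto)
  then show ?thesis by simp
qed

lemma abel_identity:
  fixes d g :: "nat \<Rightarrow> real"
  shows "(\<Sum>n\<le>K. d n * g n) = (\<Sum>k<K. (\<Sum>n\<le>k. d n) * (g k - g (Suc k))) + (\<Sum>n\<le>K. d n) * g K"
  by (induction K) (simp_all add: algebra_simps)

lemma abel_cmp:
  fixes x y g :: "nat \<Rightarrow> real"
  assumes xy: "\<And>k. (\<Sum>n\<le>k. x n) \<le> (\<Sum>n\<le>k. y n)"
    and dec: "\<And>n. g (Suc n) \<le> g n" and nn: "\<And>n. g n \<ge> 0"
  shows "(\<Sum>n\<le>K. x n * g n) \<le> (\<Sum>n\<le>K. y n * g n)"
proof -
  define d where "d n = y n - x n" for n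
  have D: "(\<Sum>n\<le>k. d n) \<ge> 0" for k using xy[of k] unfolding d_def by (simp add: sum_subtractf)
  have "(\<Sum>n\<le>K. d n * g n) \<ge> 0"
    unfolding abel_identity
    by (intro add_nonneg_nonneg sum_nonneg mult_nonneg_nonneg D nn) (use dec in auto)
  then show ?thesis unfolding d_def by (simp add: algebra_simps sum_subtractf)
qed

lemma bound_main:
  fixes beta :: "nat \<Rightarrow> real"
  assumes pos: "\<And>n. beta n > 0" and C0: "C0 \<ge> 1" "\<forall>m n. n \<le> m \<longrightarrow> beta m \<le> C0 * beta n"
    and h: "h \<in> Hinf" and f: "f \<in> H2 beta"
  shows "(\<lambda>z. h z * f z) \<in> H2 beta \<and> H2_norm beta (\<lambda>z. h z * f z) \<le> sqrt C0 * sup_norm h * H2_norm beta f"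
proof -
  define S where "S = sup_norm h"
  have hh: "h holomorphic_on ball 0 1" using h unfolding Hinf_def by auto
  have hS: "norm (h z) \<le> S" if "norm z < 1" for z using Hinf_bdd[OF h that] unfolding S_def .
  have S0: "S \<ge> 0" unfolding S_def by (rule sup_norm_nonneg[OF h])
  have ff: "f holomorphic_on ball 0 1" and fs: "summable (\<lambda>n. (norm (tcoeff f n))\<^sup>2 * beta n)"
    using f unfolding H2_def by auto
  define F where "F = (\<Sum>n. (norm (tcoeff f n))\<^sup>2 * beta n)"
  define g where "g n = Sup (beta ` {n..})" for n
  have bdd: "bdd_above (beta ` {n..})" for n
    unfolding bdd_above_def using C0(2) by (intro exI[of _ "C0 * beta 0"]) auto
  have bg: "beta n \<le> g n" for n unfolding g_def by (rule cSUP_upper[OF _ bdd]) auto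
  have gC: "g n \<le> C0 * beta n" for n unfolding g_def using C0(2) by (intro cSUP_least) auto
  have gdec: "g (Suc n) \<le> g n" for n unfolding g_def
    by (rule cSUP_subset_mono[OF _ bdd]) auto
  have g0: "g n \<ge> 0" for n using bg[of n] pos[of n] by simp
  define d where "d n = (norm (tcoeff (\<lambda>z. h z * f z) n))\<^sup>2" for n
  have part: "(\<Sum>n\<le>K. d n * beta n) \<le> C0 * S\<^sup>2 * F" for K
  proof -
    have "(\<Sum>n\<le>K. d n * beta n) \<le> (\<Sum>n\<le>K. d n * g n)"
      by (intro sum_mono mult_left_mono bg) (auto simp: d_def)
    also have "\<dots> \<le> (\<Sum>n\<le>K. (S\<^sup>2 * (norm (tcoeff f n))\<^sup>2) * g n)"
      by (rule abel_cmp[where g=g, OF _ gdec g0]) (use toeplitz[OF hh hS ff] in \<open>auto simp: d_def sum_distrib_left\<close>)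
    also have "\<dots> \<le> (\<Sum>n\<le>K. (S\<^sup>2 * (norm (tcoeff f n))\<^sup>2) * (C0 * beta n))"
      by (intro sum_mono mult_left_mono gC) auto
    also have "\<dots> = C0 * S\<^sup>2 * (\<Sum>n\<le>K. (norm (tcoeff f n))\<^sup>2 * beta n)"
      by (simp add: sum_distrib_left mult_ac)
    also have "\<dots> \<le> C0 * S\<^sup>2 * F"
      unfolding F_def using C0(1) by (intro mult_left_mono sum_le_suminf fs) (auto intro!: mult_nonneg_nonneg less_imp_le[OF pos])
    finally show ?thesis .
  qed
  have part': "(\<Sum>n<K. d n * beta n) \<le> C0 * S\<^sup>2 * F" for K
  proof (cases K)
    case 0
    have "0 \<le> F" unfolding F_def using fs by (intro suminf_nonneg) (auto intro!: mult_nonneg_nonneg less_imp_le[OF pos])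
    then show ?thesis using 0 C0(1) by simp
  next
    case (Suc K')
    then show ?thesis using part[of K'] by (simp add: lessThan_Suc_atMost)
  qed
  have dn: "0 \<le> d n * beta n" for n using pos[of n] by (simp add: d_def)
  have sd: "summable (\<lambda>n. d n * beta n)"
    by (rule summableI_nonneg_bounded[OF dn part'])
  have hf: "(\<lambda>z. h z * f z) \<in> H2 beta"
    unfolding H2_def using sd hh ff by (auto simp: d_def intro!: holomorphic_intros)
  have "(\<Sum>n. d n * beta n) \<le> C0 * S\<^sup>2 * F"
    by (rule suminf_le_const[OF sd part'])
  then have "sqrt (\<Sum>n. d n * beta n) \<le> sqrt (C0 * S\<^sup>2 * F)" by (rule real_sqrt_le_mono)
  also have "\<dots> = sqrt C0 * S * sqrt F" using S0 by (simp add: real_sqrt_mult)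
  finally have "H2_norm beta (\<lambda>z. h z * f z) \<le> sqrt C0 * sup_norm h * H2_norm beta f"
    unfolding H2_norm_def d_def[symmetric] F_def[symmetric] S_def .
  with hf show ?thesis by simp
qed

lemma nat_infsum_eq:
  fixes f :: "nat \<Rightarrow> 'a::banach"
  assumes "summable (\<lambda>n. norm (f n))"
  shows "infsum f UNIV = suminf f"
  by (rule infsumI[OF norm_summable_imp_has_sum[OF assms]])
     (use assms in \<open>auto intro: summable_sums summable_norm_cancel\<close>)

lemma series_swap:
  fixes u :: "nat \<Rightarrow> nat \<Rightarrow> complex" and p q :: "nat \<Rightarrow> real"
  assumes b: "\<And>j n. norm (u j n) \<le> p j * q n"
    and p: "summable p" "\<And>j. p j \<ge> 0" and q: "summable q" "\<And>n. q n \<ge> 0"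
  shows "(\<Sum>j. \<Sum>n. u j n) = (\<Sum>n. \<Sum>j. u j n)"
proof -
  have pq: "(\<lambda>(j, n). p j * q n) summable_on UNIV \<times> UNIV"
  proof (rule summable_on_SigmaI[where g = "\<lambda>j. p j * suminf q"])
    fix j :: nat
    have "summable (\<lambda>n. norm (p j * q n))" using p(2)[of j] q
      by (simp add: abs_mult)
    moreover have "(\<lambda>n. p j * q n) sums (p j * suminf q)"
      by (rule sums_mult[OF summable_sums[OF q(1)]])
    ultimately show "((\<lambda>n. case (j, n) of (j, n) \<Rightarrow> p j * q n) has_sum p j * suminf q) UNIV"
      by (simp add: norm_summable_imp_has_sum)
  next
    show "(\<lambda>j. p j * suminf q) summable_on UNIV"
      using p q by (subst summable_on_UNIV_nonneg_real_iff) (auto intro!: summable_mult2 suminf_nonneg mult_nonneg_nonneg)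
  next
    fix j n show "0 \<le> (case (j, n) of (j, n) \<Rightarrow> p j * q n)" using p(2) q(2) by simp
  qed
  have cmp: "(\<lambda>x. norm (case x of (j, n) \<Rightarrow> u j n)) summable_on UNIV \<times> UNIV"
  proof (rule summable_on_comparison_test[OF pq])
    fix x :: "nat \<times> nat"
    show "norm (case x of (j, n) \<Rightarrow> u j n) \<le> (case x of (j, n) \<Rightarrow> p j * q n)"
      by (cases x) (simp only: prod.case b)
    show "0 \<le> norm (case x of (j, n) \<Rightarrow> u j n)" by (rule norm_ge_zero)
  qed
  have "(\<lambda>(j, n). u j n) summable_on UNIV \<times> UNIV"
    using cmp by (rule abs_summable_summable[rotated, OF _]) 
  then have sw: "infsum (\<lambda>j. infsum (\<lambda>n. u j n) UNIV) UNIV = infsum (\<lambda>n. infsum (\<lambda>j. u j n) UNIV) UNIV"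
    by (rule infsum_swap_banach)
  have s1: "summable (\<lambda>n. norm (u j n))" for j
    by (rule summable_comparison_test[OF _ summable_mult[OF q(1), of "p j"]]) (intro exI allI impI, simp add: b)
  have s2: "summable (\<lambda>j. norm (u j n))" for n
    by (rule summable_comparison_test[OF _ summable_mult2[OF p(1), of "q n"]]) (intro exI allI impI, simp add: b)
  have i1: "infsum (\<lambda>n. u j n) UNIV = (\<Sum>n. u j n)" for j by (rule nat_infsum_eq[OF s1])
  have i2: "infsum (\<lambda>j. u j n) UNIV = (\<Sum>j. u j n)" for n by (rule nat_infsum_eq[OF s2])
  have s3: "summable (\<lambda>j. norm (\<Sum>n. u j n))"
  proof (rule summable_comparison_test[OF _ summable_mult2[OF p(1), of "suminf q"]])
    show "\<exists>N. \<forall>j\<ge>N. norm (norm (\<Sum>n. u j n)) \<le> p j * suminf q"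
    proof (intro exI allI impI)
      fix j :: nat
      have "norm (\<Sum>n. u j n) \<le> (\<Sum>n. norm (u j n))" by (rule summable_norm[OF s1])
      also have "\<dots> \<le> (\<Sum>n. p j * q n)"
        by (rule suminf_le[OF _ s1 summable_mult[OF q(1)]]) (rule b)
      also have "\<dots> = p j * suminf q" by (rule suminf_mult[OF q(1)])
      finally show "norm (norm (\<Sum>n. u j n)) \<le> p j * suminf q" by simp
    qed
  qed
  have s4: "summable (\<lambda>n. norm (\<Sum>j. u j n))"
  proof (rule summable_comparison_test[OF _ summable_mult[OF q(1), of "suminf p"]])
    show "\<exists>N. \<forall>n\<ge>N. norm (norm (\<Sum>j. u j n)) \<le> suminf p * q n"
    proof (intro exI allI impI)
      fix n :: nat
      have "norm (\<Sum>j. u j n) \<le> (\<Sum>j. norm (u j n))" by (rule summable_norm[OF s2])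
      also have "\<dots> \<le> (\<Sum>j. p j * q n)"
        by (rule suminf_le[OF _ s2 summable_mult2[OF p(1)]]) (rule b)
      also have "\<dots> = suminf p * q n" by (rule suminf_mult2[OF p(1), symmetric])
      finally show "norm (norm (\<Sum>j. u j n)) \<le> suminf p * q n" by simp
    qed
  qed
  show ?thesis using sw unfolding i1 i2 nat_infsum_eq[OF s3] nat_infsum_eq[OF s4] .
qed

locale kern =
  fixes beta :: "nat \<Rightarrow> real" and w :: "nat \<Rightarrow> complex"
  assumes pos: "\<And>n. beta n > 0"
    and lim: "liminf (\<lambda>n. ereal (root n (beta n))) \<ge> 1"
    and w: "\<And>m. norm (w m) < 1"
begin

definition Q :: "nat \<Rightarrow> real" where "Q m = (\<Sum>n. (norm (w m) ^ 2) ^ n / beta n)"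
definition K :: "nat \<Rightarrow> real" where "K m = sqrt (Q m)"
definition e :: "nat \<Rightarrow> nat \<Rightarrow> complex" where
  "e j n = cnj (w j) ^ n / complex_of_real (beta n * K j)"
definition G :: "nat \<Rightarrow> nat \<Rightarrow> complex" where "G j m = (\<Sum>n. e j n * w m ^ n)"

lemma sQ: "summable (\<lambda>n. (norm (w m) ^ 2) ^ n / beta n)"
  by (rule LS[OF pos lim]) (use w[of m] in \<open>auto simp: power_less_one_iff abs_square_less_1\<close>)

lemma Q0: "Q m \<ge> 1 / beta 0"
proof -
  have "sum (\<lambda>n. (norm (w m) ^ 2) ^ n / beta n) {0} \<le> Q m"
    unfolding Q_def by (rule sum_le_suminf[OF sQ]) (auto intro!: divide_nonneg_nonneg less_imp_le[OF pos])
  then show ?thesis by simp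
qed

lemma Qpos: "Q m > 0"
proof -
  have "0 < 1 / beta 0" using pos[of 0] by simp
  then show ?thesis using Q0[of m] by linarith
qed

lemma Kpos: "K m > 0"
  unfolding K_def using Qpos[of m] by simp

lemma K2: "(K m)\<^sup>2 = Q m"
  unfolding K_def using Qpos[of m] by simp

lemma invK: "1 / K m \<le> sqrt (beta 0)"
proof -
  have "sqrt (1 / beta 0) \<le> K m" unfolding K_def by (rule real_sqrt_le_mono[OF Q0])
  then have "1 / K m \<le> 1 / sqrt (1 / beta 0)"
    using pos[of 0] Kpos[of m] by (intro divide_left_mono) auto
  then show ?thesis using pos[of 0] by (simp add: real_sqrt_divide)
qed

lemma norm_e: "norm (e j n) = norm (w j) ^ n / (beta n * K j)"
  unfolding e_def norm_divide norm_power complex_mod_cnj norm_of_real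
  using pos[of n] Kpos[of j] by simp

lemma e_sq: "(norm (e j n))\<^sup>2 * beta n = ((norm (w j) ^ 2) ^ n / beta n) / (K j)\<^sup>2"
proof -
  have *: "(x / (b * k))\<^sup>2 * b = (x\<^sup>2 / b) / k\<^sup>2" if "b > 0" "k > 0" for x b k :: real
    using that by (simp add: power2_eq_square field_simps)
  show ?thesis unfolding norm_e * [OF pos Kpos] by (simp add: power_mult[symmetric] mult.commute)
qed

lemma e_sums: "(\<lambda>n. (norm (e j n))\<^sup>2 * beta n) sums 1"
proof -
  have "(\<lambda>n. ((norm (w j) ^ 2) ^ n / beta n) / (K j)\<^sup>2) sums (Q j / (K j)\<^sup>2)"
    unfolding Q_def by (rule sums_divide[OF summable_sums[OF sQ]])
  then show ?thesis unfolding e_sq using K2[of j] Qpos[of j] by simp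
qed

lemma e_bound: "norm (e j n) \<le> sqrt (beta 0) / beta n"
proof -
  have "norm (e j n) = norm (w j) ^ n * (1 / K j) / beta n" by (simp add: norm_e)
  also have "\<dots> \<le> 1 * sqrt (beta 0) / beta n"
    using pos[of n] w[of j] invK[of j] Kpos[of j]
    by (intro divide_right_mono mult_mono) (auto simp: power_le_one less_imp_le)
  finally show ?thesis by simp
qed

lemma G_bound: "norm (G j m) \<le> K m"
proof -
  define x where "x n = norm (e j n) * sqrt (beta n)" for n
  define y where "y n = norm (w m) ^ n / sqrt (beta n)" for n
  have x2: "(x n)\<^sup>2 = (norm (e j n))\<^sup>2 * beta n" for n
    using pos[of n] by (simp add: x_def power_mult_distrib)
  have y2: "(y n)\<^sup>2 = (norm (w m) ^ 2) ^ n / beta n" for n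
    using pos[of n] by (simp add: y_def power_divide power_mult[symmetric] mult.commute)
  have sx: "summable (\<lambda>n. (x n)\<^sup>2)" unfolding x2 using e_sums by (rule sums_summable)
  have sy: "summable (\<lambda>n. (y n)\<^sup>2)" unfolding y2 by (rule sQ)
  have xy: "\<bar>x n * y n\<bar> = norm (e j n * w m ^ n)" for n
    using pos[of n] by (simp add: x_def y_def norm_mult norm_power)
  have sn: "summable (\<lambda>n. norm (e j n * w m ^ n))" using SCS(1)[OF sx sy] unfolding xy .
  have "norm (G j m) \<le> (\<Sum>n. norm (e j n * w m ^ n))"
    unfolding G_def by (rule summable_norm[OF sn])
  also have "\<dots> \<le> sqrt (\<Sum>n. (x n)\<^sup>2) * sqrt (\<Sum>n. (y n)\<^sup>2)"
    using SCS(2)[OF sx sy] unfolding xy .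
  also have "\<dots> = K m"
    unfolding x2 y2 K_def Q_def[symmetric] using sums_unique[OF e_sums, symmetric] by simp
  finally show ?thesis .
qed

lemma G_diag: "G m m = complex_of_real (K m)"
proof -
  have eq: "e m n * w m ^ n = complex_of_real (((norm (w m) ^ 2) ^ n / beta n) / K m)" for n
  proof -
    have "cnj (w m) ^ n * w m ^ n = (w m * cnj (w m)) ^ n"
      by (simp add: power_mult_distrib mult.commute)
    also have "w m * cnj (w m) = complex_of_real (norm (w m) ^ 2)"
      by (rule complex_norm_square[symmetric])
    finally have "cnj (w m) ^ n * w m ^ n = complex_of_real ((norm (w m) ^ 2) ^ n)"
      by (simp only: of_real_power)
    then show ?thesis unfolding e_def by (simp add: field_simps)
  qed
  have "(\<lambda>n. ((norm (w m) ^ 2) ^ n / beta n) / K m) sums (Q m / K m)"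
    unfolding Q_def by (rule sums_divide[OF summable_sums[OF sQ]])
  then have "(\<lambda>n. e m n * w m ^ n) sums complex_of_real (Q m / K m)"
    unfolding eq by (rule sums_of_real)
  moreover have "Q m / K m = K m" using K2[of m] Kpos[of m] by (simp add: power2_eq_square field_simps)
  ultimately show ?thesis unfolding G_def by (simp add: sums_iff)
qed

end


primrec sgns :: "(nat \<Rightarrow> nat \<Rightarrow> complex) \<Rightarrow> nat \<Rightarrow> real list" where
  "sgns G 0 = []"
| "sgns G (Suc m) = sgns G m @
     [if 0 \<le> Re (\<Sum>j<m. complex_of_real (sgns G m ! j * (1/3) ^ j) * G j m) then 1 else -1]"

definition sgn_seq :: "(nat \<Rightarrow> nat \<Rightarrow> complex) \<Rightarrow> nat \<Rightarrow> real" where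
  "sgn_seq G j = sgns G (Suc j) ! j"

lemma sgns_len: "length (sgns G m) = m"
  by (induction m) auto

lemma sgns_nth: "j < m \<Longrightarrow> sgns G m ! j = sgn_seq G j"
proof (induction m)
  case 0 then show ?case by simp
next
  case (Suc m)
  show ?case
  proof (cases "j < m")
    case True
    then have "sgns G (Suc m) ! j = sgns G m ! j" by (simp add: nth_append sgns_len)
    then show ?thesis using Suc True by simp
  next
    case False
    then have "j = m" using Suc by simp
    then show ?thesis by (simp add: sgn_seq_def)
  qed
qed

lemma sgn_seq_eq: "sgn_seq G m =
   (if 0 \<le> Re (\<Sum>j<m. complex_of_real (sgn_seq G j * (1/3) ^ j) * G j m) then 1 else -1)"
proof -
  have "(\<Sum>j<m. complex_of_real (sgns G m ! j * (1/3) ^ j) * G j m)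
      = (\<Sum>j<m. complex_of_real (sgn_seq G j * (1/3) ^ j) * G j m)"
    by (intro sum.cong refl) (simp add: sgns_nth)
  then show ?thesis unfolding sgn_seq_def by (simp add: nth_append sgns_len)
qed

lemma sgn_seq_abs: "\<bar>sgn_seq G m\<bar> = 1"
  by (subst sgn_seq_eq) simp

context kern
begin

definition a :: "nat \<Rightarrow> complex" where "a j = complex_of_real (sgn_seq G j * (1/3) ^ j)"
definition c :: "nat \<Rightarrow> complex" where "c n = (\<Sum>j. a j * e j n)"

lemma norm_a: "norm (a j) = (1/3) ^ j"
  unfolding a_def norm_of_real abs_mult sgn_seq_abs by simp

lemma geo3: "(\<lambda>j. (1/3::real) ^ j) sums (3/2)"
  using geometric_sums[of "1/3::real"] by simp

lemma ae_bound: "norm (a j * e j n) \<le> (1/3) ^ j * (sqrt (beta 0) / beta n)"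
  unfolding norm_mult norm_a by (intro mult_left_mono e_bound) simp

lemma ae_summable: "summable (\<lambda>j. norm (a j * e j n))"
  by (rule summable_comparison_test[OF _ summable_mult2[OF sums_summable[OF geo3], of "sqrt (beta 0) / beta n"]])
     (use ae_bound in \<open>auto intro!: exI[of _ 0]\<close>)

lemma c_bound: "norm (c n) \<le> 3/2 * (sqrt (beta 0) / beta n)"
proof -
  have "norm (c n) \<le> (\<Sum>j. norm (a j * e j n))"
    unfolding c_def by (rule summable_norm[OF ae_summable])
  also have "\<dots> \<le> (\<Sum>j. (1/3) ^ j * (sqrt (beta 0) / beta n))"
    by (rule suminf_le[OF ae_bound ae_summable summable_mult2[OF sums_summable[OF geo3]]])
  also have "\<dots> = 3/2 * (sqrt (beta 0) / beta n)"
    using sums_unique[OF sums_mult2[OF geo3, of "sqrt (beta 0) / beta n"]] by simp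
  finally show ?thesis .
qed

lemma c_sq: "(norm (c n))\<^sup>2 \<le> 3/2 * (\<Sum>j. (1/3) ^ j * (norm (e j n))\<^sup>2)"
proof -
  define x where "x j = sqrt ((1/3::real) ^ j)" for j
  define y where "y j = sqrt ((1/3::real) ^ j) * norm (e j n)" for j
  have x2: "(x j)\<^sup>2 = (1/3) ^ j" for j by (simp add: x_def)
  have y2: "(y j)\<^sup>2 = (1/3) ^ j * (norm (e j n))\<^sup>2" for j by (simp add: y_def power_mult_distrib)
  have xy: "\<bar>x j * y j\<bar> = norm (a j * e j n)" for j
    by (simp add: x_def y_def norm_mult norm_a)
  have sx: "summable (\<lambda>j. (x j)\<^sup>2)" unfolding x2 using geo3 by (rule sums_summable)
  have sy: "summable (\<lambda>j. (y j)\<^sup>2)" unfolding y2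
    by (rule summable_comparison_test[OF _ summable_mult2[OF sums_summable[OF geo3], of "(sqrt (beta 0) / beta n)\<^sup>2"]])
       (auto intro!: exI[of _ 0] mult_left_mono power_mono e_bound)
  have "norm (c n) \<le> (\<Sum>j. norm (a j * e j n))"
    unfolding c_def by (rule summable_norm[OF ae_summable])
  also have "\<dots> \<le> sqrt (\<Sum>j. (x j)\<^sup>2) * sqrt (\<Sum>j. (y j)\<^sup>2)"
    using SCS(2)[OF sx sy] unfolding xy .
  also have "\<dots> = sqrt (3/2) * sqrt (\<Sum>j. (1/3) ^ j * (norm (e j n))\<^sup>2)"
    unfolding x2 y2 sums_unique[OF geo3, symmetric] ..
  finally have le: "norm (c n) \<le> sqrt (3/2) * sqrt (\<Sum>j. (1/3) ^ j * (norm (e j n))\<^sup>2)" .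
  have nn: "0 \<le> (\<Sum>j. (1/3::real) ^ j * (norm (e j n))\<^sup>2)"
    using sy unfolding y2 by (intro suminf_nonneg) auto
  have "(norm (c n))\<^sup>2 \<le> (sqrt (3/2) * sqrt (\<Sum>j. (1/3) ^ j * (norm (e j n))\<^sup>2))\<^sup>2"
    using le by (intro power_mono) auto
  also have "\<dots> = 3/2 * (\<Sum>j. (1/3) ^ j * (norm (e j n))\<^sup>2)"
    using nn by (simp add: power_mult_distrib)
  finally show ?thesis .
qed

end

context kern
begin

lemma e_le1: "(norm (e j n))\<^sup>2 * beta n \<le> 1"
proof -
  have "sum (\<lambda>n. (norm (e j n))\<^sup>2 * beta n) {n} \<le> (\<Sum>n. (norm (e j n))\<^sup>2 * beta n)"
    by (rule sum_le_suminf[OF sums_summable[OF e_sums]]) (auto intro!: mult_nonneg_nonneg less_imp_le[OF pos])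
  then show ?thesis using sums_unique[OF e_sums] by simp
qed

lemma c_H2sum: "summable (\<lambda>n. (norm (c n))\<^sup>2 * beta n)"
proof (rule summableI_nonneg_bounded)
  fix n show "0 \<le> (norm (c n))\<^sup>2 * beta n" using pos[of n] by simp
next
  fix N
  define v where "v j n = (1/3::real) ^ j * ((norm (e j n))\<^sup>2 * beta n)" for j n
  have v_le: "v j n \<le> (1/3) ^ j" for j n
    unfolding v_def using e_le1[of j n] by (simp add: mult_left_le)
  have v_nn: "0 \<le> v j n" for j n unfolding v_def using pos[of n] by simp
  have sv: "summable (\<lambda>j. v j n)" for n
    by (rule summable_comparison_test[OF _ sums_summable[OF geo3]]) (use v_le v_nn in auto)
  have cb: "(norm (c n))\<^sup>2 * beta n \<le> 3/2 * (\<Sum>j. v j n)" for n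
  proof -
    have s1: "summable (\<lambda>j. (1/3::real) ^ j * (norm (e j n))\<^sup>2)"
      using summable_divide[OF sv[of n], of "beta n"] pos[of n] unfolding v_def by (simp add: mult.assoc)
    have "(norm (c n))\<^sup>2 * beta n \<le> 3/2 * (\<Sum>j. (1/3) ^ j * (norm (e j n))\<^sup>2) * beta n"
      using c_sq[of n] pos[of n] by (intro mult_right_mono) auto
    also have "\<dots> = 3/2 * (\<Sum>j. v j n)"
      unfolding v_def using suminf_mult2[OF s1, of "beta n"] by (simp add: mult.assoc)
    finally show ?thesis .
  qed
  have "(\<Sum>n<N. (norm (c n))\<^sup>2 * beta n) \<le> (\<Sum>n<N. 3/2 * (\<Sum>j. v j n))"
    by (rule sum_mono) (rule cb)
  also have "\<dots> = 3/2 * (\<Sum>j. \<Sum>n<N. v j n)"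
    by (simp only: sum_distrib_left[symmetric] suminf_sum[OF sv])
  also have "\<dots> \<le> 3/2 * (\<Sum>j. (1/3) ^ j)"
  proof (intro mult_left_mono suminf_le)
    show "summable (\<lambda>j. \<Sum>n<N. v j n)" by (rule summable_sum) (rule sv)
    show "summable (\<lambda>j. (1/3::real) ^ j)" by (rule sums_summable[OF geo3])
    fix j
    have "(\<Sum>n<N. v j n) = (1/3) ^ j * (\<Sum>n<N. (norm (e j n))\<^sup>2 * beta n)"
      unfolding v_def by (simp add: sum_distrib_left)
    also have "\<dots> \<le> (1/3) ^ j * 1"
    proof (rule mult_left_mono)
      have "(\<Sum>n<N. (norm (e j n))\<^sup>2 * beta n) \<le> (\<Sum>n. (norm (e j n))\<^sup>2 * beta n)"
        by (rule sum_le_suminf[OF sums_summable[OF e_sums[of j]]]) (auto intro!: mult_nonneg_nonneg less_imp_le[OF pos])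
      then show "(\<Sum>n<N. (norm (e j n))\<^sup>2 * beta n) \<le> 1" using sums_unique[OF e_sums[of j]] by simp
    qed simp
    finally show "(\<Sum>n<N. v j n) \<le> (1/3) ^ j" by simp
  qed simp
  also have "\<dots> = 3/2 * (3/2)" by (simp only: sums_unique[OF geo3, symmetric])
  finally show "(\<Sum>n<N. (norm (c n))\<^sup>2 * beta n) \<le> 3/2 * (3/2)" .
qed

definition fF :: "complex \<Rightarrow> complex" where "fF = eval_fps (Abs_fps c)"

lemma c_radius: "fps_conv_radius (Abs_fps c) \<ge> 1"
  unfolding fps_conv_radius_def
proof (rule conv_radius_geI_ex')
  fix r :: real assume r: "0 < r" "ereal r < 1"
  have sl: "summable (\<lambda>n. r ^ n / beta n)" by (rule LS[OF pos lim]) (use r in auto)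
  show "summable (\<lambda>n. Abs_fps c $ n * of_real r ^ n)"
  proof (rule summable_comparison_test[OF _ summable_mult[OF sl, of "3/2 * sqrt (beta 0)"]])
    show "\<exists>N. \<forall>n\<ge>N. norm (Abs_fps c $ n * complex_of_real r ^ n) \<le> 3 / 2 * sqrt (beta 0) * (r ^ n / beta n)"
    proof (intro exI allI impI)
      fix n :: nat
      have "norm (Abs_fps c $ n * complex_of_real r ^ n) = norm (c n) * r ^ n"
        using r by (simp add: norm_mult norm_power)
      also have "\<dots> \<le> 3/2 * (sqrt (beta 0) / beta n) * r ^ n"
        using r by (intro mult_right_mono c_bound) auto
      finally show "norm (Abs_fps c $ n * complex_of_real r ^ n) \<le> 3 / 2 * sqrt (beta 0) * (r ^ n / beta n)"
        by simp
    qed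
  qed
qed

lemma ball_sub: "ball 0 1 \<subseteq> eball (0::complex) (fps_conv_radius (Abs_fps c))"
proof (rule subsetI)
  fix z :: complex assume "z \<in> ball 0 1"
  then have "ereal (norm z) < 1" by simp
  then have "ereal (norm z) < fps_conv_radius (Abs_fps c)"
    using c_radius by (meson less_le_trans)
  then show "z \<in> eball 0 (fps_conv_radius (Abs_fps c))" by (simp add: eball_def)
qed

lemma fF_hol: "fF holomorphic_on ball 0 1"
  unfolding fF_def by (rule holomorphic_on_eval_fps[OF ball_sub])

lemma fF_coeff: "tcoeff fF n = c n"
  using tcoeff_eval[OF c_radius, of fF n] unfolding fF_def by simp

lemma fF_H2: "fF \<in> H2 beta"
  unfolding H2_def using fF_hol c_H2sum by (simp add: fF_coeff)

end

context kern
begin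

lemma ew_summable: "summable (\<lambda>n. norm (e j n * w m ^ n))"
proof -
  have sl: "summable (\<lambda>n. norm (w m) ^ n / beta n)"
    by (rule LS[OF pos lim]) (use w[of m] in auto)
  show ?thesis
  proof (rule summable_comparison_test[OF _ summable_mult[OF sl, of "sqrt (beta 0)"]])
    show "\<exists>N. \<forall>n\<ge>N. norm (norm (e j n * w m ^ n)) \<le> sqrt (beta 0) * (norm (w m) ^ n / beta n)"
    proof (intro exI allI impI)
      fix n :: nat
      have "norm (norm (e j n * w m ^ n)) = norm (e j n) * norm (w m) ^ n" by (simp add: norm_mult norm_power)
      also have "\<dots> \<le> sqrt (beta 0) / beta n * norm (w m) ^ n"
        by (intro mult_right_mono e_bound) auto
      finally show "norm (norm (e j n * w m ^ n)) \<le> sqrt (beta 0) * (norm (w m) ^ n / beta n)" by simp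
    qed
  qed
qed

lemma fF_eval: "fF (w m) = (\<Sum>j. a j * G j m)"
proof -
  have sl: "summable (\<lambda>n. norm (w m) ^ n / beta n)"
    by (rule LS[OF pos lim]) (use w[of m] in auto)
  have "fF (w m) = (\<Sum>n. c n * w m ^ n)" unfolding fF_def eval_fps_def by simp
  also have "\<dots> = (\<Sum>n. \<Sum>j. a j * e j n * w m ^ n)"
    unfolding c_def by (simp add: suminf_mult2[OF summable_norm_cancel[OF ae_summable]])
  also have "\<dots> = (\<Sum>j. \<Sum>n. a j * e j n * w m ^ n)"
  proof (rule series_swap[symmetric])
    fix j n
    have "norm (a j * e j n * w m ^ n) = norm (a j * e j n) * norm (w m) ^ n" by (simp add: norm_mult norm_power)
    also have "\<dots> \<le> ((1/3) ^ j * (sqrt (beta 0) / beta n)) * norm (w m) ^ n"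
      by (intro mult_right_mono ae_bound) auto
    finally show "norm (a j * e j n * w m ^ n) \<le> (1/3) ^ j * (sqrt (beta 0) * (norm (w m) ^ n / beta n))"
      by simp
  next
    show "summable (\<lambda>j. (1/3::real) ^ j)" by (rule sums_summable[OF geo3])
    show "summable (\<lambda>n. sqrt (beta 0) * (norm (w m) ^ n / beta n))" by (rule summable_mult[OF sl])
  qed (auto intro!: mult_nonneg_nonneg divide_nonneg_nonneg less_imp_le[OF pos])
  also have "\<dots> = (\<Sum>j. a j * G j m)"
    unfolding G_def by (simp add: mult.assoc suminf_mult[OF summable_norm_cancel[OF ew_summable]])
  finally show ?thesis .
qed

lemma fF_lower: "norm (fF (w m)) \<ge> (1/3) ^ m * K m / 2"
proof -
  define b where "b j = a j * G j m" for j
  have bb: "norm (b j) \<le> (1/3) ^ j * K m" for j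
    unfolding b_def norm_mult norm_a by (intro mult_left_mono G_bound) auto
  have sb: "summable (\<lambda>j. norm (b j))"
    by (rule summable_comparison_test[OF _ summable_mult2[OF sums_summable[OF geo3], of "K m"]])
       (use bb in auto)
  have split: "(\<Sum>j. b j) = (\<Sum>i. b (i + Suc m)) + ((\<Sum>j<m. b j) + b m)"
    using suminf_split_initial_segment[OF summable_norm_cancel[OF sb], of "Suc m"] by simp
  define S' where "S' = (\<Sum>j<m. b j)"
  have sig: "sgn_seq G m = (if 0 \<le> Re S' then 1 else -1)"
    unfolding S'_def b_def a_def by (rule sgn_seq_eq)
  have bm: "b m = complex_of_real (sgn_seq G m * (1/3) ^ m * K m)"
    unfolding b_def a_def G_diag by simp
  have head: "norm (S' + b m) \<ge> (1/3) ^ m * K m"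
  proof -
    have Kp: "0 \<le> (1/3::real) ^ m * K m" using Kpos[of m] by simp
    have "\<bar>Re (S' + b m)\<bar> \<ge> (1/3) ^ m * K m"
      using Kp unfolding bm sig by (cases "0 \<le> Re S'") auto
    then show ?thesis using abs_Re_le_cmod[of "S' + b m"] by linarith
  qed
  have st: "summable (\<lambda>i. norm (b (i + Suc m)))"
    using summable_ignore_initial_segment[OF sb, of "Suc m"] .
  have gs: "(\<lambda>i. (1/3::real) ^ (i + Suc m) * K m) sums ((1/3) ^ m * K m / 2)"
  proof -
    have "(\<lambda>i. ((1/3::real) ^ Suc m * K m) * (1/3) ^ i) sums (((1/3) ^ Suc m * K m) * (3/2))"
      by (rule sums_mult[OF geo3])
    moreover have "((1/3::real) ^ Suc m * K m) * (3/2) = (1/3) ^ m * K m / 2" by simp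
    ultimately show ?thesis by (simp add: power_add mult_ac)
  qed
  have tail: "norm (\<Sum>i. b (i + Suc m)) \<le> (1/3) ^ m * K m / 2"
  proof -
    have "norm (\<Sum>i. b (i + Suc m)) \<le> (\<Sum>i. norm (b (i + Suc m)))" by (rule summable_norm[OF st])
    also have "\<dots> \<le> (\<Sum>i. (1/3) ^ (i + Suc m) * K m)"
      by (rule suminf_le[OF _ st sums_summable[OF gs]]) (rule bb)
    also have "\<dots> = (1/3) ^ m * K m / 2" by (rule sums_unique[OF gs, symmetric])
    finally show ?thesis .
  qed
  have "norm (S' + b m) - norm (\<Sum>i. b (i + Suc m)) \<le> norm ((S' + b m) + (\<Sum>i. b (i + Suc m)))"
    by (rule norm_diff_ineq)
  also have "(S' + b m) + (\<Sum>i. b (i + Suc m)) = fF (w m)"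
    unfolding fF_eval b_def[symmetric] split S'_def by simp
  finally show ?thesis using head tail by linarith
qed

end

lemma mult_sub_Hinf:
  fixes beta :: "nat \<Rightarrow> real"
  assumes pos: "\<And>n. beta n > 0"
    and lim: "liminf (\<lambda>n. ereal (root n (beta n))) \<ge> 1"
    and h: "h \<in> multipliers beta"
  shows "h \<in> Hinf"
proof (rule ccontr)
  assume nh: "h \<notin> Hinf"
  have hh: "h holomorphic_on ball 0 1" and hm: "\<And>f. f \<in> H2 beta \<Longrightarrow> (\<lambda>z. h z * f z) \<in> H2 beta"
    using h unfolding multipliers_def by auto
  have nb: "\<not> bounded (h ` ball 0 1)" using nh hh unfolding Hinf_def by auto
  have "\<forall>m. \<exists>z. norm z < 1 \<and> norm (h z) > 2 * 3 ^ m * (real m + 1)"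
  proof (rule ccontr)
    assume "\<not> (\<forall>m. \<exists>z. norm z < 1 \<and> norm (h z) > 2 * 3 ^ m * (real m + 1))"
    then obtain m where "\<And>z. norm z < 1 \<Longrightarrow> norm (h z) \<le> 2 * 3 ^ m * (real m + 1)"
      by (metis not_less)
    then have "bounded (h ` ball 0 1)" unfolding bounded_iff by (intro exI[of _ "2 * 3 ^ m * (real m + 1)"]) auto
    with nb show False by simp
  qed
  then obtain w where w: "\<And>m. norm (w m) < 1" and hw: "\<And>m. norm (h (w m)) > 2 * 3 ^ m * (real m + 1)"
    by metis
  interpret kern beta w by unfold_locales (use pos lim w in auto)
  have hf: "(\<lambda>z. h z * fF z) \<in> H2 beta" by (rule hm[OF fF_H2])
  define Nn where "Nn = H2_norm beta (\<lambda>z. h z * fF z)"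
  have bnd: "real m + 1 < Nn" for m
  proof -
    have "norm (h (w m) * fF (w m)) \<le> Nn * Kn beta (w m)"
      using PE[OF pos lim hf w[of m]] unfolding Nn_def by simp
    moreover have "Kn beta (w m) = K m" unfolding Kn_def K_def Q_def ..
    ultimately have le1: "norm (h (w m)) * norm (fF (w m)) \<le> Nn * K m" by (simp add: norm_mult)
    have "norm (h (w m)) * ((1/3) ^ m * K m / 2) \<le> norm (h (w m)) * norm (fF (w m))"
      using fF_lower[of m] by (intro mult_left_mono) auto
    then have "norm (h (w m)) * ((1/3) ^ m * K m / 2) \<le> Nn * K m" using le1 by linarith
    then have "norm (h (w m)) * (1/3) ^ m / 2 \<le> Nn"
      using Kpos[of m] by (simp add: field_simps)
    moreover have "real m + 1 < norm (h (w m)) * (1/3) ^ m / 2"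
    proof -
      have "(2 * 3 ^ m * (real m + 1)) * ((1/3) ^ m / 2) < norm (h (w m)) * ((1/3) ^ m / 2)"
        using hw[of m] by (intro mult_strict_right_mono) auto
      moreover have "(2 * 3 ^ m * (real m + 1)) * ((1/3::real) ^ m / 2) = real m + 1"
        by (simp add: power_one_over field_simps)
      moreover have "norm (h (w m)) * ((1/3::real) ^ m / 2) = norm (h (w m)) * (1/3) ^ m / 2" by simp
      ultimately show ?thesis by linarith
    qed
    ultimately show ?thesis by linarith
  qed
  have "real (nat \<lceil>Nn\<rceil>) + 1 < Nn" by (rule bnd)
  moreover have "Nn \<le> real (nat \<lceil>Nn\<rceil>)" by linarith
  ultimately show False by linarith
qed

lemma sup_le_mult:
  fixes beta :: "nat \<Rightarrow> real"
  assumes pos: "\<And>n. beta n > 0"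
    and lim: "liminf (\<lambda>n. ereal (root n (beta n))) \<ge> 1"
    and B: "\<And>f. f \<in> H2 beta \<Longrightarrow> (\<lambda>z. h z * f z) \<in> H2 beta \<and> H2_norm beta (\<lambda>z. h z * f z) \<le> B * H2_norm beta f"
    and h: "h \<in> Hinf"
  shows "sup_norm h \<le> mult_norm beta h"
proof -
  define M where "M = mult_norm beta h"
  have nn: "H2_norm beta f \<ge> 0" if "f \<in> H2 beta" for f
  proof -
    have "0 \<le> (\<Sum>n. (norm (tcoeff f n))\<^sup>2 * beta n)"
      using that unfolding H2_def by (intro suminf_nonneg) (auto intro!: mult_nonneg_nonneg less_imp_le[OF pos])
    then show ?thesis unfolding H2_norm_def by simp
  qed
  have bdd: "bdd_above ((\<lambda>f. H2_norm beta (\<lambda>z. h z * f z)) ` {f \<in> H2 beta. H2_norm beta f \<le> 1})"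
    unfolding bdd_above_def
  proof (intro exI[of _ "\<bar>B\<bar>"] ballI)
    fix y assume "y \<in> (\<lambda>f. H2_norm beta (\<lambda>z. h z * f z)) ` {f \<in> H2 beta. H2_norm beta f \<le> 1}"
    then obtain f where f: "f \<in> H2 beta" "H2_norm beta f \<le> 1" and y: "y = H2_norm beta (\<lambda>z. h z * f z)"
      by auto
    have "y \<le> B * H2_norm beta f" using B[OF f(1)] y by simp
    also have "\<dots> \<le> \<bar>B\<bar> * H2_norm beta f" using nn[OF f(1)] by (intro mult_right_mono) auto
    also have "\<dots> \<le> \<bar>B\<bar> * 1" using f(2) by (intro mult_left_mono) auto
    finally show "y \<le> \<bar>B\<bar>" by simp
  qed
  have upper: "H2_norm beta (\<lambda>z. h z * f z) \<le> M" if "f \<in> H2 beta" "H2_norm beta f \<le> 1" for f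
    unfolding M_def mult_norm_def by (rule cSUP_upper[OF _ bdd]) (use that in auto)
  have M0: "M \<ge> 0"
    using upper[OF zero_H2[of beta]] zero_norm[of beta] by simp
  have step1: "H2_norm beta (\<lambda>z. h z * g z) \<le> M * H2_norm beta g" if g: "g \<in> H2 beta" for g
  proof (cases "H2_norm beta g = 0")
    case True
    then show ?thesis using B[OF g] by simp
  next
    case False
    define \<nu> where "\<nu> = H2_norm beta g"
    have \<nu>: "\<nu> > 0" using False nn[OF g] unfolding \<nu>_def by simp
    let ?g = "\<lambda>z. complex_of_real (1 / \<nu>) * g z"
    have g1: "?g \<in> H2 beta" "H2_norm beta ?g = 1"
      using H2_scale[OF g, of "complex_of_real (1 / \<nu>)"] \<nu> unfolding \<nu>_def by (auto simp: norm_divide)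
    have hg: "(\<lambda>z. h z * g z) \<in> H2 beta" using B[OF g] by simp
    have "(\<lambda>z. h z * ?g z) = (\<lambda>z. complex_of_real (1 / \<nu>) * (h z * g z))"
      by (simp add: algebra_simps)
    then have "H2_norm beta (\<lambda>z. h z * ?g z) = (1 / \<nu>) * H2_norm beta (\<lambda>z. h z * g z)"
      using H2_scale(2)[OF hg, of "complex_of_real (1 / \<nu>)"] \<nu> by (simp add: norm_divide)
    moreover have "H2_norm beta (\<lambda>z. h z * ?g z) \<le> M" by (rule upper[OF g1(1)]) (use g1(2) in simp)
    ultimately have "(1 / \<nu>) * H2_norm beta (\<lambda>z. h z * g z) \<le> M" by simp
    then show ?thesis using \<nu> unfolding \<nu>_def[symmetric] by (simp add: field_simps)
  qed
  have pw: "(\<lambda>z. h z ^ n) \<in> H2 beta \<and> H2_norm beta (\<lambda>z. h z ^ n) \<le> M ^ n * sqrt (beta 0)" for n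
  proof (induction n)
    case 0
    show ?case using monom_H2[of 0 beta] monom_norm[of beta 0] by simp
  next
    case (Suc n)
    have eq: "(\<lambda>z. h z ^ Suc n) = (\<lambda>z. h z * h z ^ n)" by simp
    have "(\<lambda>z. h z * h z ^ n) \<in> H2 beta" using B Suc by blast
    moreover have "H2_norm beta (\<lambda>z. h z * h z ^ n) \<le> M * H2_norm beta (\<lambda>z. h z ^ n)"
      using step1 Suc by blast
    moreover have "M * H2_norm beta (\<lambda>z. h z ^ n) \<le> M * (M ^ n * sqrt (beta 0))"
      using Suc M0 by (intro mult_left_mono) auto
    ultimately show ?case unfolding eq by simp
  qed
  show ?thesis
    unfolding sup_norm_def M_def[symmetric]
  proof (rule cSUP_least)
    show "ball (0::complex) 1 \<noteq> {}" by (metis centre_in_ball empty_iff zero_less_one)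
    fix w :: complex assume "w \<in> ball 0 1"
    then have w: "norm w < 1" by simp
    define A where "A = sqrt (beta 0) * Kn beta w + 1"
    have "summable (\<lambda>n. (norm w ^ 2) ^ n / beta n)"
      by (rule LS[OF pos lim]) (use w in \<open>auto simp: power_less_one_iff abs_square_less_1\<close>)
    then have "0 \<le> (\<Sum>n. (norm w ^ 2) ^ n / beta n)"
      by (intro suminf_nonneg) (auto intro!: divide_nonneg_nonneg less_imp_le[OF pos])
    then have K0: "Kn beta w \<ge> 0" unfolding Kn_def by simp
    have "0 \<le> sqrt (beta 0) * Kn beta w" using K0 pos[of 0] by simp
    then have A: "A > 0" unfolding A_def by linarith
    have le: "norm (h w) \<le> M * root n A" if n: "n > 0" for n
    proof -
      have "norm (h w) ^ n = norm (h w ^ n)" by (simp add: norm_power)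
      also have "\<dots> \<le> H2_norm beta (\<lambda>z. h z ^ n) * Kn beta w"
        using PE[OF pos lim _ w, of "\<lambda>z. h z ^ n"] pw[of n] by simp
      also have "\<dots> \<le> (M ^ n * sqrt (beta 0)) * Kn beta w"
        using pw[of n] K0 by (intro mult_right_mono) auto
      also have "\<dots> \<le> M ^ n * A"
        unfolding A_def using M0 by (simp add: algebra_simps)
      finally have *: "norm (h w) ^ n \<le> M ^ n * A" .
      have "norm (h w) = root n (norm (h w) ^ n)" using n by (simp add: real_root_power_cancel)
      also have "\<dots> \<le> root n (M ^ n * A)" using n * by (rule real_root_le_mono)
      also have "\<dots> = M * root n A" using n M0 by (simp add: real_root_mult real_root_power_cancel)
      finally show ?thesis .
    qed
    have "(\<lambda>n. M * root n A) \<longlonglongrightarrow> M * 1"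
      by (intro tendsto_mult tendsto_const LIMSEQ_root_const A)
    then have "(\<lambda>n. M * root n A) \<longlonglongrightarrow> M" by simp
    moreover have "\<exists>N. \<forall>n\<ge>N. norm (h w) \<le> M * root n A"
      using le by (intro exI[of _ 1]) auto
    ultimately show "norm (h w) \<le> M"
      by (rule LIMSEQ_le_const)
  qed
qed

theorem mainTheorem16:
  fixes beta :: "nat \<Rightarrow> real"
  assumes pos: "\<And>n. beta n > 0"
    and lim: "liminf (\<lambda>n. ereal (root n (beta n))) \<ge> 1"
  shows "(multipliers beta = Hinf \<and>
          (\<exists>C>0. \<forall>h\<in>Hinf.
             (\<forall>f\<in>H2 beta. H2_norm beta (\<lambda>z. h z * f z) \<le> C * sup_norm h * H2_norm beta f) \<and>
             sup_norm h \<le> mult_norm beta h \<and> mult_norm beta h \<le> C * sup_norm h))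
         \<longleftrightarrow> ess_decreasing beta"
proof
  assume "multipliers beta = Hinf \<and>
          (\<exists>C>0. \<forall>h\<in>Hinf.
             (\<forall>f\<in>H2 beta. H2_norm beta (\<lambda>z. h z * f z) \<le> C * sup_norm h * H2_norm beta f) \<and>
             sup_norm h \<le> mult_norm beta h \<and> mult_norm beta h \<le> C * sup_norm h)"
  then obtain C where "C > 0" and "\<forall>h\<in>Hinf. \<forall>f\<in>H2 beta. H2_norm beta (\<lambda>z. h z * f z) \<le> C * sup_norm h * H2_norm beta f"
    by blast
  then show "ess_decreasing beta" using forward_dir[of beta C] pos by blast
next
  assume "ess_decreasing beta"
  then obtain C0 where C0: "C0 \<ge> 1" "\<forall>m n. n \<le> m \<longrightarrow> beta m \<le> C0 * beta n"
    unfolding ess_decreasing_def by blast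
  note bm = bound_main[OF pos C0]
  have "multipliers beta = Hinf"
  proof
    show "multipliers beta \<subseteq> Hinf" using mult_sub_Hinf[OF pos lim] by blast
    show "Hinf \<subseteq> multipliers beta"
      using bm unfolding multipliers_def by (auto simp: Hinf_def)
  qed
  moreover have "\<forall>h\<in>Hinf.
             (\<forall>f\<in>H2 beta. H2_norm beta (\<lambda>z. h z * f z) \<le> sqrt C0 * sup_norm h * H2_norm beta f) \<and>
             sup_norm h \<le> mult_norm beta h \<and> mult_norm beta h \<le> sqrt C0 * sup_norm h"
  proof (rule ballI, intro conjI)
    fix h assume h: "h \<in> Hinf"
    show "\<forall>f\<in>H2 beta. H2_norm beta (\<lambda>z. h z * f z) \<le> sqrt C0 * sup_norm h * H2_norm beta f"
      using bm[OF h] by blast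
    show "sup_norm h \<le> mult_norm beta h"
      using sup_le_mult[OF pos lim _ h, of "sqrt C0 * sup_norm h"] bm[OF h] by blast
    have s0: "sup_norm h \<ge> 0" using sup_norm_nonneg[OF h] .
    show "mult_norm beta h \<le> sqrt C0 * sup_norm h"
      unfolding mult_norm_def
    proof (rule cSUP_least)
      show "{f \<in> H2 beta. H2_norm beta f \<le> 1} \<noteq> {}"
        using zero_H2[of beta] zero_norm[of beta] by force
      fix f assume "f \<in> {f \<in> H2 beta. H2_norm beta f \<le> 1}"
      then have f: "f \<in> H2 beta" "H2_norm beta f \<le> 1" by auto
      have "H2_norm beta (\<lambda>z. h z * f z) \<le> sqrt C0 * sup_norm h * H2_norm beta f"
        using bm[OF h f(1)] by blast
      also have "\<dots> \<le> sqrt C0 * sup_norm h * 1"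
        using f(2) s0 C0(1) by (intro mult_left_mono) auto
      finally show "H2_norm beta (\<lambda>z. h z * f z) \<le> sqrt C0 * sup_norm h" by simp
    qed
  qed
  moreover have "sqrt C0 > 0" using C0 by simp
  ultimately show "multipliers beta = Hinf \<and>
          (\<exists>C>0. \<forall>h\<in>Hinf.
             (\<forall>f\<in>H2 beta. H2_norm beta (\<lambda>z. h z * f z) \<le> C * sup_norm h * H2_norm beta f) \<and>
             sup_norm h \<le> mult_norm beta h \<and> mult_norm beta h \<le> C * sup_norm h)"
    by blast
qed


end
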